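(* Let $\mathcal{Q}$ be either the category of unital involutive quantales with unital involutive homomorphisms or the category of strong involutive quantales with strong involutive homomorphisms, and regard locales as objects of $\mathcal{Q}$. Then any colimit in $\mathcal{Q}$ of a diagram of locales is a strictly two-sided quantale.
   Context: A quantale is a complete lattice with an associative multiplication distributing over arbitrary joins in both variables; $1$ is its top. It is unital if it has a multiplicative unit $e$, strong if $1\cdot 1=1$. An involutive quantale has an involution $^*$ with $a^{**}=a$, $(a\cdot b)^*=b^*\cdot a^*$, $(\bigvee a_i)^*=\bigvee a_i^*$. Homomorphisms preserve joins and multiplication; unital ones preserve the unit, strong ones the top, involutive ones the involution. A locale (frame) is regarded as a unital involutive quantale with multiplication $\wedge$, unit the top and trivial involution; locale homomorphisms are exactly the unital (equivalently strong) quantale homomorphisms between locales. A strictly two-sided quantale is a unital quantale whose unit is its top. *)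

theory Defs
  imports Main
begin

text \<open>Only the behaviour of the operations on the carrier matters.\<close>

record 'a qstruct =
  qcar  :: "'a set"
  qle   :: "'a \<Rightarrow> 'a \<Rightarrow> bool"
  qmul  :: "'a \<Rightarrow> 'a \<Rightarrow> 'a"
  qunit :: 'a
  qinv  :: "'a \<Rightarrow> 'a"

definition qorder :: "'a qstruct \<Rightarrow> bool" where
  "qorder Q \<longleftrightarrow>
     (\<forall>a\<in>qcar Q. qle Q a a) \<and>
     (\<forall>a\<in>qcar Q. \<forall>b\<in>qcar Q. qle Q a b \<and> qle Q b a \<longrightarrow> a = b) \<and>
     (\<forall>a\<in>qcar Q. \<forall>b\<in>qcar Q. \<forall>c\<in>qcar Q. qle Q a b \<and> qle Q b c \<longrightarrow> qle Q a c)"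

definition is_lub :: "'a qstruct \<Rightarrow> 'a set \<Rightarrow> 'a \<Rightarrow> bool" where
  "is_lub Q A x \<longleftrightarrow> x \<in> qcar Q \<and> (\<forall>a\<in>A. qle Q a x) \<and>
     (\<forall>y\<in>qcar Q. (\<forall>a\<in>A. qle Q a y) \<longrightarrow> qle Q x y)"

definition is_glb :: "'a qstruct \<Rightarrow> 'a set \<Rightarrow> 'a \<Rightarrow> bool" where
  "is_glb Q A x \<longleftrightarrow> x \<in> qcar Q \<and> (\<forall>a\<in>A. qle Q x a) \<and>
     (\<forall>y\<in>qcar Q. (\<forall>a\<in>A. qle Q y a) \<longrightarrow> qle Q y x)"

definition qSup :: "'a qstruct \<Rightarrow> 'a set \<Rightarrow> 'a" where
  "qSup Q A = (THE x. is_lub Q A x)"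

definition qtop :: "'a qstruct \<Rightarrow> 'a" where
  "qtop Q = qSup Q (qcar Q)"

definition complete_lat :: "'a qstruct \<Rightarrow> bool" where
  "complete_lat Q \<longleftrightarrow> qorder Q \<and> (\<forall>A \<subseteq> qcar Q. \<exists>x. is_lub Q A x)"

definition quantale :: "'a qstruct \<Rightarrow> bool" where
  "quantale Q \<longleftrightarrow> complete_lat Q \<and>
     (\<forall>a\<in>qcar Q. \<forall>b\<in>qcar Q. qmul Q a b \<in> qcar Q) \<and>
     (\<forall>a\<in>qcar Q. \<forall>b\<in>qcar Q. \<forall>c\<in>qcar Q. qmul Q (qmul Q a b) c = qmul Q a (qmul Q b c)) \<and>
     (\<forall>a\<in>qcar Q. \<forall>B \<subseteq> qcar Q.
        qmul Q a (qSup Q B) = qSup Q ((\<lambda>b. qmul Q a b) ` B) \<and>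
        qmul Q (qSup Q B) a = qSup Q ((\<lambda>b. qmul Q b a) ` B))"

definition involutive_quantale :: "'a qstruct \<Rightarrow> bool" where
  "involutive_quantale Q \<longleftrightarrow> quantale Q \<and>
     (\<forall>a\<in>qcar Q. qinv Q a \<in> qcar Q \<and> qinv Q (qinv Q a) = a) \<and>
     (\<forall>a\<in>qcar Q. \<forall>b\<in>qcar Q. qinv Q (qmul Q a b) = qmul Q (qinv Q b) (qinv Q a)) \<and>
     (\<forall>A \<subseteq> qcar Q. qinv Q (qSup Q A) = qSup Q (qinv Q ` A))"

definition is_unit_elem :: "'a qstruct \<Rightarrow> 'a \<Rightarrow> bool" where
  "is_unit_elem Q e \<longleftrightarrow> e \<in> qcar Q \<and> (\<forall>a\<in>qcar Q. qmul Q e a = a \<and> qmul Q a e = a)"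

definition unital :: "'a qstruct \<Rightarrow> bool" where
  "unital Q \<longleftrightarrow> is_unit_elem Q (qunit Q)"

definition strong :: "'a qstruct \<Rightarrow> bool" where
  "strong Q \<longleftrightarrow> qmul Q (qtop Q) (qtop Q) = qtop Q"

definition strictly_two_sided :: "'a qstruct \<Rightarrow> bool" where
  "strictly_two_sided Q \<longleftrightarrow> quantale Q \<and> is_unit_elem Q (qtop Q)"

definition is_locale :: "'a qstruct \<Rightarrow> bool" where
  "is_locale L \<longleftrightarrow> involutive_quantale L \<and>
     (\<forall>a\<in>qcar L. \<forall>b\<in>qcar L. is_glb L {a, b} (qmul L a b)) \<and>
     qunit L = qtop L \<and>
     (\<forall>a\<in>qcar L. qinv L a = a)"

datatype qcat = UnitalInvQ | StrongInvQ

definition qobj :: "qcat \<Rightarrow> 'a qstruct \<Rightarrow> bool" where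
  "qobj K Q \<longleftrightarrow> involutive_quantale Q \<and>
     (case K of UnitalInvQ \<Rightarrow> unital Q | StrongInvQ \<Rightarrow> strong Q)"

definition qhom :: "qcat \<Rightarrow> 'a qstruct \<Rightarrow> 'b qstruct \<Rightarrow> ('a \<Rightarrow> 'b) \<Rightarrow> bool" where
  "qhom K Q R f \<longleftrightarrow> f ` qcar Q \<subseteq> qcar R \<and>
     (\<forall>A \<subseteq> qcar Q. f (qSup Q A) = qSup R (f ` A)) \<and>
     (\<forall>a\<in>qcar Q. \<forall>b\<in>qcar Q. f (qmul Q a b) = qmul R (f a) (f b)) \<and>
     (\<forall>a\<in>qcar Q. f (qinv Q a) = qinv R (f a)) \<and>
     (case K of UnitalInvQ \<Rightarrow> f (qunit Q) = qunit R
              | StrongInvQ \<Rightarrow> f (qtop Q) = qtop R)"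

text \<open>A diagram in the category K: a set of vertices I with objects D i, and a set M
of arrows (i, j, f) with f a K-morphism D i \<rightarrow> D j.  (Colimits of a functor from a
small category coincide with colimits of its underlying graph diagram.)
A diagram of locales: every D i is a locale.\<close>
definition locale_diagram ::
  "qcat \<Rightarrow> 'i set \<Rightarrow> ('i \<Rightarrow> 'a qstruct) \<Rightarrow> ('i \<times> 'i \<times> ('a \<Rightarrow> 'a)) set \<Rightarrow> bool" where
  "locale_diagram K I D M \<longleftrightarrow> (\<forall>i\<in>I. is_locale (D i)) \<and>
     (\<forall>(i, j, f)\<in>M. i \<in> I \<and> j \<in> I \<and> qhom K (D i) (D j) f)"

definition cocone ::
  "qcat \<Rightarrow> 'i set \<Rightarrow> ('i \<Rightarrow> 'a qstruct) \<Rightarrow> ('i \<times> 'i \<times> ('a \<Rightarrow> 'a)) set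
     \<Rightarrow> 'c qstruct \<Rightarrow> ('i \<Rightarrow> 'a \<Rightarrow> 'c) \<Rightarrow> bool" where
  "cocone K I D M C lam \<longleftrightarrow> qobj K C \<and>
     (\<forall>i\<in>I. qhom K (D i) C (lam i)) \<and>
     (\<forall>(i, j, f)\<in>M. \<forall>x\<in>qcar (D i). lam j (f x) = lam i x)"

text \<open>Competing cocones are taken with vertex
in the same ambient type as the colimit vertex.\<close>
definition is_colimit ::
  "qcat \<Rightarrow> 'i set \<Rightarrow> ('i \<Rightarrow> 'a qstruct) \<Rightarrow> ('i \<times> 'i \<times> ('a \<Rightarrow> 'a)) set
     \<Rightarrow> 'c qstruct \<Rightarrow> ('i \<Rightarrow> 'a \<Rightarrow> 'c) \<Rightarrow> bool" where
  "is_colimit K I D M C lam \<longleftrightarrow> cocone K I D M C lam \<and>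
     (\<forall>(C' :: 'c qstruct) mu. cocone K I D M C' mu \<longrightarrow>
        (\<exists>h. qhom K C C' h \<and> (\<forall>i\<in>I. \<forall>x\<in>qcar (D i). h (lam i x) = mu i x) \<and>
             (\<forall>h'. qhom K C C' h' \<and> (\<forall>i\<in>I. \<forall>x\<in>qcar (D i). h' (lam i x) = mu i x)
                   \<longrightarrow> (\<forall>y\<in>qcar C. h' y = h y))))"

end

theory Submission imports Defs begin

lemma qrefl: "qorder Q \<Longrightarrow> a \<in> qcar Q \<Longrightarrow> qle Q a a"
  unfolding qorder_def by (erule conjE, erule bspec)
lemma qantisym: "qorder Q \<Longrightarrow> a \<in> qcar Q \<Longrightarrow> b \<in> qcar Q \<Longrightarrow> qle Q a b \<Longrightarrow> qle Q b a \<Longrightarrow> a = b"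
proof -
  assume o: "qorder Q" and h: "a \<in> qcar Q" "b \<in> qcar Q" "qle Q a b" "qle Q b a"
  have "\<forall>a\<in>qcar Q. \<forall>b\<in>qcar Q. qle Q a b \<and> qle Q b a \<longrightarrow> a = b"
    using o unfolding qorder_def by (elim conjE)
  then have "qle Q a b \<and> qle Q b a \<longrightarrow> a = b" using h(1,2) by (elim ballE) auto
  then show "a = b" using h(3,4) by (elim impE) auto
qed
lemma qtrans: "qorder Q \<Longrightarrow> a \<in> qcar Q \<Longrightarrow> b \<in> qcar Q \<Longrightarrow> c \<in> qcar Q \<Longrightarrow> qle Q a b \<Longrightarrow> qle Q b c \<Longrightarrow> qle Q a c"
proof -
  assume o: "qorder Q" and h: "a \<in> qcar Q" "b \<in> qcar Q" "c \<in> qcar Q" "qle Q a b" "qle Q b c"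
  have "\<forall>a\<in>qcar Q. \<forall>b\<in>qcar Q. \<forall>c\<in>qcar Q. qle Q a b \<and> qle Q b c \<longrightarrow> qle Q a c"
    using o unfolding qorder_def by (elim conjE)
  then have "qle Q a b \<and> qle Q b c \<longrightarrow> qle Q a c" using h(1,2,3) by (elim ballE) auto
  then show "qle Q a c" using h(4,5) by (elim impE) auto
qed


lemma iq_q: "involutive_quantale Q \<Longrightarrow> quantale Q"
  unfolding involutive_quantale_def by (erule conjunct1)
lemma iq_inv1: "involutive_quantale Q \<Longrightarrow> \<forall>a\<in>qcar Q. qinv Q a \<in> qcar Q \<and> qinv Q (qinv Q a) = a"
  unfolding involutive_quantale_def by (drule conjunct2, erule conjunct1)
lemma iq_inv2: "involutive_quantale Q \<Longrightarrow> \<forall>a\<in>qcar Q. \<forall>b\<in>qcar Q. qinv Q (qmul Q a b) = qmul Q (qinv Q b) (qinv Q a)"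
  unfolding involutive_quantale_def by (drule conjunct2, drule conjunct2, erule conjunct1)
lemma iq_invs: "involutive_quantale Q \<Longrightarrow> \<forall>A \<subseteq> qcar Q. qinv Q (qSup Q A) = qSup Q (qinv Q ` A)"
  unfolding involutive_quantale_def by (drule conjunct2, drule conjunct2, erule conjunct2)
lemma q_cl: "quantale Q \<Longrightarrow> complete_lat Q"
  unfolding quantale_def by (erule conjunct1)
lemma q_mul: "quantale Q \<Longrightarrow> \<forall>a\<in>qcar Q. \<forall>b\<in>qcar Q. qmul Q a b \<in> qcar Q"
  unfolding quantale_def by (drule conjunct2, erule conjunct1)
lemma q_assoc: "quantale Q \<Longrightarrow> \<forall>a\<in>qcar Q. \<forall>b\<in>qcar Q. \<forall>c\<in>qcar Q. qmul Q (qmul Q a b) c = qmul Q a (qmul Q b c)"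
  unfolding quantale_def by (drule conjunct2, drule conjunct2, erule conjunct1)
lemma q_dist: "quantale Q \<Longrightarrow> \<forall>a\<in>qcar Q. \<forall>B \<subseteq> qcar Q.
        qmul Q a (qSup Q B) = qSup Q ((\<lambda>b. qmul Q a b) ` B) \<and>
        qmul Q (qSup Q B) a = qSup Q ((\<lambda>b. qmul Q b a) ` B)"
  unfolding quantale_def by (drule conjunct2, drule conjunct2, erule conjunct2)
lemma cl_o: "complete_lat Q \<Longrightarrow> qorder Q"
  unfolding complete_lat_def by (erule conjunct1)
lemma loc_iq: "is_locale L \<Longrightarrow> involutive_quantale L"
  unfolding is_locale_def by (erule conjunct1)
lemma loc_glb: "is_locale L \<Longrightarrow> \<forall>a\<in>qcar L. \<forall>b\<in>qcar L. is_glb L {a, b} (qmul L a b)"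
  unfolding is_locale_def by (drule conjunct2, erule conjunct1)
lemma loc_unit: "is_locale L \<Longrightarrow> qunit L = qtop L"
  unfolding is_locale_def by (drule conjunct2, drule conjunct2, erule conjunct1)
lemma qobj_iq: "qobj K Q \<Longrightarrow> involutive_quantale Q"
  unfolding qobj_def by (erule conjunct1)
lemma qobj_K: "qobj K Q \<Longrightarrow> (case K of UnitalInvQ \<Rightarrow> unital Q | StrongInvQ \<Rightarrow> strong Q)"
  unfolding qobj_def by (erule conjunct2)
lemma hom_img: "qhom K Q R f \<Longrightarrow> f ` qcar Q \<subseteq> qcar R"
  unfolding qhom_def by (erule conjunct1)
lemma hom_sup: "qhom K Q R f \<Longrightarrow> \<forall>A \<subseteq> qcar Q. f (qSup Q A) = qSup R (f ` A)"
  unfolding qhom_def by (drule conjunct2, erule conjunct1)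
lemma hom_mul: "qhom K Q R f \<Longrightarrow> \<forall>a\<in>qcar Q. \<forall>b\<in>qcar Q. f (qmul Q a b) = qmul R (f a) (f b)"
  unfolding qhom_def by (drule conjunct2, drule conjunct2, erule conjunct1)
lemma hom_inv: "qhom K Q R f \<Longrightarrow> \<forall>a\<in>qcar Q. f (qinv Q a) = qinv R (f a)"
  unfolding qhom_def by (drule conjunct2, drule conjunct2, drule conjunct2, erule conjunct1)
lemma hom_K: "qhom K Q R f \<Longrightarrow> (case K of UnitalInvQ \<Rightarrow> f (qunit Q) = qunit R
              | StrongInvQ \<Rightarrow> f (qtop Q) = qtop R)"
  unfolding qhom_def by (drule conjunct2, drule conjunct2, drule conjunct2, erule conjunct2)
lemma homI: "f ` qcar Q \<subseteq> qcar R \<Longrightarrow> \<forall>A \<subseteq> qcar Q. f (qSup Q A) = qSup R (f ` A) \<Longrightarrow>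
  \<forall>a\<in>qcar Q. \<forall>b\<in>qcar Q. f (qmul Q a b) = qmul R (f a) (f b) \<Longrightarrow>
  \<forall>a\<in>qcar Q. f (qinv Q a) = qinv R (f a) \<Longrightarrow>
  (case K of UnitalInvQ \<Rightarrow> f (qunit Q) = qunit R | StrongInvQ \<Rightarrow> f (qtop Q) = qtop R) \<Longrightarrow> qhom K Q R f"
  unfolding qhom_def by (intro conjI)
lemma cc_obj: "cocone K I D M C lam \<Longrightarrow> qobj K C"
  unfolding cocone_def by (erule conjunct1)
lemma cc_hom: "cocone K I D M C lam \<Longrightarrow> \<forall>i\<in>I. qhom K (D i) C (lam i)"
  unfolding cocone_def by (drule conjunct2, erule conjunct1)
lemma cc_comm: "cocone K I D M C lam \<Longrightarrow> \<forall>(i, j, f)\<in>M. \<forall>x\<in>qcar (D i). lam j (f x) = lam i x"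
  unfolding cocone_def by (drule conjunct2, erule conjunct2)
lemma col_cc: "is_colimit K I D M C lam \<Longrightarrow> cocone K I D M C lam"
  unfolding is_colimit_def by (erule conjunct1)
lemma col_univ: "is_colimit K I D M (C :: 'c qstruct) lam \<Longrightarrow> cocone K I D M (C' :: 'c qstruct) mu \<Longrightarrow>
        (\<exists>h. qhom K C C' h \<and> (\<forall>i\<in>I. \<forall>x\<in>qcar (D i). h (lam i x) = mu i x) \<and>
             (\<forall>h'. qhom K C C' h' \<and> (\<forall>i\<in>I. \<forall>x\<in>qcar (D i). h' (lam i x) = mu i x)
                   \<longrightarrow> (\<forall>y\<in>qcar C. h' y = h y)))"
  unfolding is_colimit_def by (drule conjunct2, erule allE, erule allE, erule mp)
lemma ld_loc: "locale_diagram K I D M \<Longrightarrow> \<forall>i\<in>I. is_locale (D i)"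
  unfolding locale_diagram_def by (erule conjunct1)

lemma lub_unique: "qorder Q \<Longrightarrow> is_lub Q A x \<Longrightarrow> is_lub Q A y \<Longrightarrow> x = y"
proof -
  assume o: "qorder Q" and x: "is_lub Q A x" and y: "is_lub Q A y"
  have 1: "qle Q x y" using x y unfolding is_lub_def by blast
  have 2: "qle Q y x" using x y unfolding is_lub_def by blast
  have 3: "x \<in> qcar Q" "y \<in> qcar Q" using x y unfolding is_lub_def by auto
  show "x = y" by (rule qantisym[OF o 3 1 2])
qed

lemma qSup_eq: "qorder Q \<Longrightarrow> is_lub Q A x \<Longrightarrow> qSup Q A = x"
  unfolding qSup_def by (rule the_equality, assumption, rule lub_unique)

lemma qSup_lub: "complete_lat Q \<Longrightarrow> A \<subseteq> qcar Q \<Longrightarrow> is_lub Q A (qSup Q A)"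
proof -
  assume c: "complete_lat Q" and A: "A \<subseteq> qcar Q"
  have "\<forall>A \<subseteq> qcar Q. \<exists>x. is_lub Q A x" using c unfolding complete_lat_def by (rule conjunct2)
  then obtain x where x: "is_lub Q A x" using A by blast
  have "qSup Q A = x" by (rule qSup_eq[OF cl_o[OF c] x])
  then show ?thesis using x by simp
qed

lemma qSup_in: "complete_lat Q \<Longrightarrow> A \<subseteq> qcar Q \<Longrightarrow> qSup Q A \<in> qcar Q"
  by (drule qSup_lub, assumption, unfold is_lub_def, erule conjunct1)

lemma qSup_ub: "complete_lat Q \<Longrightarrow> A \<subseteq> qcar Q \<Longrightarrow> a \<in> A \<Longrightarrow> qle Q a (qSup Q A)"
proof -
  assume "complete_lat Q" "A \<subseteq> qcar Q" "a \<in> A"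
  then have "\<forall>a\<in>A. qle Q a (qSup Q A)" using qSup_lub unfolding is_lub_def by metis
  then show ?thesis using \<open>a \<in> A\<close> by (rule bspec)
qed

lemma qSup_least: "complete_lat Q \<Longrightarrow> A \<subseteq> qcar Q \<Longrightarrow> y \<in> qcar Q \<Longrightarrow> \<forall>a\<in>A. qle Q a y \<Longrightarrow> qle Q (qSup Q A) y"
proof -
  assume "complete_lat Q" "A \<subseteq> qcar Q" and y: "y \<in> qcar Q" "\<forall>a\<in>A. qle Q a y"
  then have "\<forall>y\<in>qcar Q. (\<forall>a\<in>A. qle Q a y) \<longrightarrow> qle Q (qSup Q A) y" using qSup_lub unfolding is_lub_def by metis
  then show ?thesis using y by blast
qed

lemma top_props: "complete_lat Q \<Longrightarrow> qtop Q \<in> qcar Q \<and> (\<forall>a\<in>qcar Q. qle Q a (qtop Q))"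
proof -
  assume c: "complete_lat Q"
  have "qSup Q (qcar Q) \<in> qcar Q" by (rule qSup_in[OF c subset_refl])
  moreover have "\<forall>a\<in>qcar Q. qle Q a (qSup Q (qcar Q))"
    using qSup_ub[OF c subset_refl] by blast
  ultimately show ?thesis unfolding qtop_def by (rule conjI)
qed

lemma sup2: "complete_lat Q \<Longrightarrow> x \<in> qcar Q \<Longrightarrow> y \<in> qcar Q \<Longrightarrow> qle Q x y \<Longrightarrow> qSup Q {x,y} = y"
proof -
  assume c: "complete_lat Q" and h: "x \<in> qcar Q" "y \<in> qcar Q" "qle Q x y"
  have o: "qorder Q" by (rule cl_o[OF c])
  have "is_lub Q {x,y} y" unfolding is_lub_def using h qrefl[OF o h(2)] by simp
  then show ?thesis by (rule qSup_eq[OF o])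
qed

lemma sup_mono:
  assumes "complete_lat Q" "complete_lat R" "f ` qcar Q \<subseteq> qcar R"
    "\<forall>A\<subseteq>qcar Q. f (qSup Q A) = qSup R (f ` A)"
    "x \<in> qcar Q" "y \<in> qcar Q" "qle Q x y"
  shows "qle R (f x) (f y)"
proof -
  have "f y = f (qSup Q {x,y})" using sup2[OF assms(1,5,6,7)] by simp
  also have "\<dots> = qSup R {f x, f y}" using assms(4,5,6) by simp
  finally have e: "f y = qSup R {f x, f y}" .
  have "{f x, f y} \<subseteq> qcar R" using assms(3,5,6) by auto
  from qSup_ub[OF assms(2) this, of "f x"] show ?thesis using e by simp
qed

lemma glb_unique: "qorder Q \<Longrightarrow> is_glb Q A x \<Longrightarrow> is_glb Q A y \<Longrightarrow> x = y"
proof -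
  assume o: "qorder Q" and x: "is_glb Q A x" and y: "is_glb Q A y"
  have 1: "qle Q x y" using x y unfolding is_glb_def by blast
  have 2: "qle Q y x" using x y unfolding is_glb_def by blast
  have 3: "x \<in> qcar Q" "y \<in> qcar Q" using x y unfolding is_glb_def by auto
  show "x = y" by (rule qantisym[OF o 3 1 2])
qed

lemma locale_top_mul:
  assumes L: "is_locale L" and x: "x \<in> qcar L"
  shows "qmul L (qtop L) x = x \<and> qmul L x (qtop L) = x"
proof -
  have cl: "complete_lat L" by (rule q_cl[OF iq_q[OF loc_iq[OF L]]])
  have o: "qorder L" by (rule cl_o[OF cl])
  have t: "qtop L \<in> qcar L" "qle L x (qtop L)" using top_props[OF cl] x by auto
  have g1: "is_glb L {qtop L, x} x" and g2: "is_glb L {x, qtop L} x"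
    using t x qrefl[OF o x] unfolding is_glb_def by auto
  have gl: "\<forall>a\<in>qcar L. \<forall>b\<in>qcar L. is_glb L {a, b} (qmul L a b)" by (rule loc_glb[OF L])
  have m1: "is_glb L {qtop L, x} (qmul L (qtop L) x)" using gl t(1) x by blast
  have m2: "is_glb L {x, qtop L} (qmul L x (qtop L))" using gl t(1) x by blast
  show ?thesis using glb_unique[OF o m1 g1] glb_unique[OF o m2 g2] by (rule conjI)
qed

lemma sub_iq:
  assumes iq: "involutive_quantale C" and S: "S \<subseteq> qcar C"
    and sup: "\<forall>A\<subseteq>S. qSup C A \<in> S"
    and mul: "\<forall>a\<in>S. \<forall>b\<in>S. qmul C a b \<in> S"
    and inv: "\<forall>a\<in>S. qinv C a \<in> S"
  shows "involutive_quantale (C\<lparr>qcar := S\<rparr>) \<and> (\<forall>A\<subseteq>S. qSup (C\<lparr>qcar := S\<rparr>) A = qSup C A)"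
proof -
  let ?E = "C\<lparr>qcar := S\<rparr>"
  have q: "quantale C" by (rule iq_q[OF iq])
  have cl: "complete_lat C" by (rule q_cl[OF q])
  have o: "qorder C" by (rule cl_o[OF cl])
  have oE: "qorder ?E" unfolding qorder_def
  proof (intro conjI ballI impI)
    fix a assume "a \<in> qcar ?E" then show "qle ?E a a" using qrefl[OF o] S by auto
  next
    fix a b assume "a \<in> qcar ?E" "b \<in> qcar ?E" "qle ?E a b \<and> qle ?E b a"
    then show "a = b" using qantisym[OF o, of a b] S by auto
  next
    fix a b c assume "a \<in> qcar ?E" "b \<in> qcar ?E" "c \<in> qcar ?E" "qle ?E a b \<and> qle ?E b c"
    then show "qle ?E a c" using qtrans[OF o, of a b c] S by auto
  qed
  have lubE: "is_lub ?E A (qSup C A)" if A: "A \<subseteq> S" for A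
  proof -
    have "is_lub C A (qSup C A)" using qSup_lub[OF cl] A S by auto
    then show "is_lub ?E A (qSup C A)" using sup A S unfolding is_lub_def by auto
  qed
  have se: "qSup ?E A = qSup C A" if A: "A \<subseteq> S" for A
    by (rule qSup_eq[OF oE lubE[OF A]])
  have clE: "complete_lat ?E" unfolding complete_lat_def
  proof (intro conjI oE allI impI)
    fix A assume A: "A \<subseteq> qcar ?E"
    then show "\<exists>x. is_lub ?E A x" using lubE[of A] by auto
  qed
  have mulc: "\<forall>a\<in>qcar C. \<forall>b\<in>qcar C. qmul C a b \<in> qcar C" by (rule q_mul[OF q])
  have assoc: "\<forall>a\<in>qcar C. \<forall>b\<in>qcar C. \<forall>c\<in>qcar C. qmul C (qmul C a b) c = qmul C a (qmul C b c)"
    by (rule q_assoc[OF q])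
  have dist: "\<forall>a\<in>qcar C. \<forall>B \<subseteq> qcar C.
        qmul C a (qSup C B) = qSup C ((\<lambda>b. qmul C a b) ` B) \<and>
        qmul C (qSup C B) a = qSup C ((\<lambda>b. qmul C b a) ` B)" by (rule q_dist[OF q])
  have qE: "quantale ?E" unfolding quantale_def
  proof (intro conjI clE)
    show "\<forall>a\<in>qcar ?E. \<forall>b\<in>qcar ?E. qmul ?E a b \<in> qcar ?E" using mul by simp
    show "\<forall>a\<in>qcar ?E. \<forall>b\<in>qcar ?E. \<forall>c\<in>qcar ?E. qmul ?E (qmul ?E a b) c = qmul ?E a (qmul ?E b c)"
    proof (intro ballI)
      fix a b c assume "a \<in> qcar ?E" "b \<in> qcar ?E" "c \<in> qcar ?E"
      then have "a \<in> qcar C" "b \<in> qcar C" "c \<in> qcar C" using S by auto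
      then show "qmul ?E (qmul ?E a b) c = qmul ?E a (qmul ?E b c)" using assoc by simp
    qed
    show "\<forall>a\<in>qcar ?E. \<forall>B\<subseteq>qcar ?E.
        qmul ?E a (qSup ?E B) = qSup ?E ((\<lambda>b. qmul ?E a b) ` B) \<and>
        qmul ?E (qSup ?E B) a = qSup ?E ((\<lambda>b. qmul ?E b a) ` B)"
    proof (intro ballI allI impI)
      fix a B assume a: "a \<in> qcar ?E" and B: "B \<subseteq> qcar ?E"
      have i1: "(\<lambda>b. qmul C a b) ` B \<subseteq> S" "(\<lambda>b. qmul C b a) ` B \<subseteq> S" using mul a B by auto
      have aC: "a \<in> qcar C" and BC: "B \<subseteq> qcar C" using a B S by auto
      have "qmul C a (qSup C B) = qSup C ((\<lambda>b. qmul C a b) ` B) \<and>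
        qmul C (qSup C B) a = qSup C ((\<lambda>b. qmul C b a) ` B)"
        using dist aC BC by blast
      then show "qmul ?E a (qSup ?E B) = qSup ?E ((\<lambda>b. qmul ?E a b) ` B) \<and>
        qmul ?E (qSup ?E B) a = qSup ?E ((\<lambda>b. qmul ?E b a) ` B)"
        using se[of B] se[OF i1(1)] se[OF i1(2)] B by simp
    qed
  qed
  have inv1: "\<forall>a\<in>qcar C. qinv C a \<in> qcar C \<and> qinv C (qinv C a) = a" by (rule iq_inv1[OF iq])
  have inv2: "\<forall>a\<in>qcar C. \<forall>b\<in>qcar C. qinv C (qmul C a b) = qmul C (qinv C b) (qinv C a)" by (rule iq_inv2[OF iq])
  have invs: "\<forall>A \<subseteq> qcar C. qinv C (qSup C A) = qSup C (qinv C ` A)" by (rule iq_invs[OF iq])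
  have "involutive_quantale ?E" unfolding involutive_quantale_def
  proof (intro conjI qE)
    show "\<forall>a\<in>qcar ?E. qinv ?E a \<in> qcar ?E \<and> qinv ?E (qinv ?E a) = a"
    proof
      fix a assume a: "a \<in> qcar ?E"
      then have "a \<in> qcar C" using S by auto
      then show "qinv ?E a \<in> qcar ?E \<and> qinv ?E (qinv ?E a) = a" using inv a inv1 by simp
    qed
    show "\<forall>a\<in>qcar ?E. \<forall>b\<in>qcar ?E. qinv ?E (qmul ?E a b) = qmul ?E (qinv ?E b) (qinv ?E a)"
    proof (intro ballI)
      fix a b assume "a \<in> qcar ?E" "b \<in> qcar ?E"
      then have "a \<in> qcar C" "b \<in> qcar C" using S by auto
      then show "qinv ?E (qmul ?E a b) = qmul ?E (qinv ?E b) (qinv ?E a)" using inv2 by simp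
    qed
    show "\<forall>A\<subseteq>qcar ?E. qinv ?E (qSup ?E A) = qSup ?E (qinv ?E ` A)"
    proof (intro allI impI)
      fix A assume A: "A \<subseteq> qcar ?E"
      have i: "qinv C ` A \<subseteq> S" using A inv by auto
      have "qinv C (qSup C A) = qSup C (qinv C ` A)" using invs A S by auto
      then show "qinv ?E (qSup ?E A) = qSup ?E (qinv ?E ` A)" using se[of A] se[OF i] A by simp
    qed
  qed
  then show ?thesis using se by blast
qed

lemma key:
  assumes col: "is_colimit K I D M C lam" and S: "S \<subseteq> qcar C"
    and sup: "\<forall>A\<subseteq>S. qSup C A \<in> S"
    and mul: "\<forall>a\<in>S. \<forall>b\<in>S. qmul C a b \<in> S"
    and inv: "\<forall>a\<in>S. qinv C a \<in> S"
    and lamS: "\<forall>i\<in>I. lam i ` qcar (D i) \<subseteq> S"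
    and ut: "case K of UnitalInvQ \<Rightarrow> qunit C \<in> S | StrongInvQ \<Rightarrow> qtop (C\<lparr>qcar := S\<rparr>) = qtop C"
  shows "qcar C \<subseteq> S"
proof -
  let ?E = "C\<lparr>qcar := S\<rparr>"
  have cc: "cocone K I D M C lam" by (rule col_cc[OF col])
  have oC: "qobj K C" by (rule cc_obj[OF cc])
  have iq: "involutive_quantale C" by (rule qobj_iq[OF oC])
  have hC: "\<forall>i\<in>I. qhom K (D i) C (lam i)" by (rule cc_hom[OF cc])
  have sub0: "involutive_quantale ?E \<and> (\<forall>A\<subseteq>S. qSup ?E A = qSup C A)"
    by (rule sub_iq[OF iq S sup mul inv])
  have sub: "involutive_quantale ?E" using sub0 by (rule conjunct1)
  have se: "\<forall>A\<subseteq>S. qSup ?E A = qSup C A" using sub0 by (rule conjunct2)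
  have oK: "case K of UnitalInvQ \<Rightarrow> unital C | StrongInvQ \<Rightarrow> strong C" by (rule qobj_K[OF oC])
  have oE: "qobj K ?E"
  proof (cases K)
    case UnitalInvQ
    then have "is_unit_elem C (qunit C)" "qunit C \<in> S" using oK ut unfolding unital_def by simp_all
    then have "unital ?E" using S unfolding unital_def is_unit_elem_def by auto
    then show ?thesis using sub UnitalInvQ unfolding qobj_def by simp
  next
    case StrongInvQ
    then have "strong C" "qtop ?E = qtop C" using oK ut by simp_all
    then have "strong ?E" unfolding strong_def by simp
    then show ?thesis using sub StrongInvQ unfolding qobj_def by simp
  qed
  have ccE: "cocone K I D M ?E lam" unfolding cocone_def
  proof (intro conjI oE)
   show "\<forall>i\<in>I. qhom K (D i) ?E (lam i)"
   proof
    fix i assume i: "i \<in> I"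
    have h: "qhom K (D i) C (lam i)" using hC i by blast
    have im: "lam i ` qcar (D i) \<subseteq> S" using lamS i by blast
    have hs: "\<forall>A\<subseteq>qcar (D i). lam i (qSup (D i) A) = qSup C (lam i ` A)" by (rule hom_sup[OF h])
    have sA: "\<forall>A\<subseteq>qcar (D i). lam i (qSup (D i) A) = qSup ?E (lam i ` A)"
    proof (intro allI impI)
      fix A assume A: "A \<subseteq> qcar (D i)"
      then have "lam i ` A \<subseteq> S" using im by auto
      then show "lam i (qSup (D i) A) = qSup ?E (lam i ` A)" using hs A se by simp
    qed
    have hk: "case K of UnitalInvQ \<Rightarrow> lam i (qunit (D i)) = qunit C
              | StrongInvQ \<Rightarrow> lam i (qtop (D i)) = qtop C" by (rule hom_K[OF h])
    show "qhom K (D i) ?E (lam i)"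
    proof (rule homI)
      show "lam i ` qcar (D i) \<subseteq> qcar ?E" using im by simp
      show "\<forall>A\<subseteq>qcar (D i). lam i (qSup (D i) A) = qSup ?E (lam i ` A)" by (rule sA)
      show "\<forall>a\<in>qcar (D i). \<forall>b\<in>qcar (D i). lam i (qmul (D i) a b) = qmul ?E (lam i a) (lam i b)"
        using hom_mul[OF h] by simp
      show "\<forall>a\<in>qcar (D i). lam i (qinv (D i) a) = qinv ?E (lam i a)"
        using hom_inv[OF h] by simp
      show "case K of UnitalInvQ \<Rightarrow> lam i (qunit (D i)) = qunit ?E | StrongInvQ \<Rightarrow> lam i (qtop (D i)) = qtop ?E"
        using hk ut by (cases K) simp_all
    qed
   qed
    show "\<forall>(i, j, f)\<in>M. \<forall>x\<in>qcar (D i). lam j (f x) = lam i x" by (rule cc_comm[OF cc])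
  qed
  obtain h where h: "qhom K C ?E h" "\<forall>i\<in>I. \<forall>x\<in>qcar (D i). h (lam i x) = lam i x"
    using col_univ[OF col ccE] by blast
  obtain h0 where h0: "\<forall>h'. qhom K C C h' \<and> (\<forall>i\<in>I. \<forall>x\<in>qcar (D i). h' (lam i x) = lam i x)
                   \<longrightarrow> (\<forall>y\<in>qcar C. h' y = h0 y)"
    using col_univ[OF col cc] by blast
  have hid: "qhom K C C id" by (rule homI) (cases K; simp)+
  have im: "h ` qcar C \<subseteq> S" using hom_img[OF h(1)] by simp
  have hh: "qhom K C C h"
  proof (rule homI)
    show "h ` qcar C \<subseteq> qcar C" using im S by blast
    show "\<forall>A\<subseteq>qcar C. h (qSup C A) = qSup C (h ` A)"
    proof (intro allI impI)
      fix A assume A: "A \<subseteq> qcar C"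
      then have "h ` A \<subseteq> S" using im by auto
      then show "h (qSup C A) = qSup C (h ` A)" using hom_sup[OF h(1)] A se by simp
    qed
    show "\<forall>a\<in>qcar C. \<forall>b\<in>qcar C. h (qmul C a b) = qmul C (h a) (h b)"
      using hom_mul[OF h(1)] by simp
    show "\<forall>a\<in>qcar C. h (qinv C a) = qinv C (h a)"
      using hom_inv[OF h(1)] by simp
    show "case K of UnitalInvQ \<Rightarrow> h (qunit C) = qunit C | StrongInvQ \<Rightarrow> h (qtop C) = qtop C"
      using hom_K[OF h(1)] ut by (cases K) simp_all
  qed
  have "qhom K C C id \<and> (\<forall>i\<in>I. \<forall>x\<in>qcar (D i). id (lam i x) = lam i x)" using hid by simp
  then have e1: "\<forall>y\<in>qcar C. id y = h0 y" using h0 by blast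
  have e2: "\<forall>y\<in>qcar C. h y = h0 y" using h0 hh h(2) by blast
  show ?thesis
  proof
    fix y assume y: "y \<in> qcar C"
    have "y = h y" using e1 e2 y by simp
    then show "y \<in> S" using im y by auto
  qed
qed

theorem corollary4p2:
  fixes K :: qcat
    and I :: "'i set"
    and D :: "'i \<Rightarrow> 'a qstruct"
    and M :: "('i \<times> 'i \<times> ('a \<Rightarrow> 'a)) set"
    and C :: "'c qstruct"
    and lam :: "'i \<Rightarrow> 'a \<Rightarrow> 'c"
  assumes "locale_diagram K I D M"
    and "is_colimit K I D M C lam"
  shows "strictly_two_sided C"
proof -
  note ld = assms(1) and col = assms(2)
  have cc: "cocone K I D M C lam" by (rule col_cc[OF col])
  have oC: "qobj K C" by (rule cc_obj[OF cc])
  have iq: "involutive_quantale C" by (rule qobj_iq[OF oC])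
  have q: "quantale C" by (rule iq_q[OF iq])
  have cl: "complete_lat C" by (rule q_cl[OF q])
  have o: "qorder C" by (rule cl_o[OF cl])
  have hC: "\<forall>i\<in>I. qhom K (D i) C (lam i)" by (rule cc_hom[OF cc])
  have Dl: "\<forall>i\<in>I. is_locale (D i)" by (rule ld_loc[OF ld])
  have clD: "complete_lat (D i)" if "i \<in> I" for i
    using Dl that q_cl iq_q loc_iq by blast
  have mulc: "\<forall>a\<in>qcar C. \<forall>b\<in>qcar C. qmul C a b \<in> qcar C" by (rule q_mul[OF q])
  have assoc: "\<forall>a\<in>qcar C. \<forall>b\<in>qcar C. \<forall>c\<in>qcar C. qmul C (qmul C a b) c = qmul C a (qmul C b c)"
    by (rule q_assoc[OF q])
  have dist: "\<forall>a\<in>qcar C. \<forall>B \<subseteq> qcar C.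
        qmul C a (qSup C B) = qSup C ((\<lambda>b. qmul C a b) ` B) \<and>
        qmul C (qSup C B) a = qSup C ((\<lambda>b. qmul C b a) ` B)" by (rule q_dist[OF q])
  have invc: "\<forall>a\<in>qcar C. qinv C a \<in> qcar C \<and> qinv C (qinv C a) = a" by (rule iq_inv1[OF iq])
  have invm: "\<forall>a\<in>qcar C. \<forall>b\<in>qcar C. qinv C (qmul C a b) = qmul C (qinv C b) (qinv C a)" by (rule iq_inv2[OF iq])
  have invs: "\<forall>A \<subseteq> qcar C. qinv C (qSup C A) = qSup C (qinv C ` A)" by (rule iq_invs[OF iq])
  have tC: "qtop C \<in> qcar C" "\<forall>a\<in>qcar C. qle C a (qtop C)" using top_props[OF cl] by auto
  have oK: "case K of UnitalInvQ \<Rightarrow> unital C | StrongInvQ \<Rightarrow> strong C" by (rule qobj_K[OF oC])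
  show ?thesis
  proof (cases K)
    case UnitalInvQ
    let ?e = "qunit C"
    have ue: "is_unit_elem C ?e" using oK UnitalInvQ unfolding unital_def by simp
    have eC: "?e \<in> qcar C" and eu: "\<forall>a\<in>qcar C. qmul C ?e a = a \<and> qmul C a ?e = a"
      using ue unfolding is_unit_elem_def by auto
    define S where "S = {a \<in> qcar C. qle C a ?e}"
    have S: "S \<subseteq> qcar C" using S_def by auto
    have sup: "\<forall>A\<subseteq>S. qSup C A \<in> S"
    proof (intro allI impI)
      fix A assume A: "A \<subseteq> S"
      then have AC: "A \<subseteq> qcar C" using S by auto
      have "\<forall>a\<in>A. qle C a ?e" using A S_def by auto
      then have "qle C (qSup C A) ?e" by (rule qSup_least[OF cl AC eC])
      then show "qSup C A \<in> S" using qSup_in[OF cl AC] S_def by simp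
    qed
    have monl: "qle C (qmul C a b) (qmul C a b')" if "a \<in> qcar C" "b \<in> qcar C" "b' \<in> qcar C" "qle C b b'" for a b b'
    proof (rule sup_mono[OF cl cl, of "qmul C a"])
      show "qmul C a ` qcar C \<subseteq> qcar C" using mulc that by auto
      show "\<forall>A\<subseteq>qcar C. qmul C a (qSup C A) = qSup C (qmul C a ` A)" using dist that by auto
    qed (use that in auto)
    have mul: "\<forall>a\<in>S. \<forall>b\<in>S. qmul C a b \<in> S"
    proof (intro ballI)
      fix a b assume a: "a \<in> S" and b: "b \<in> S"
      have aC: "a \<in> qcar C" and bC: "b \<in> qcar C" and be: "qle C b ?e" and ae: "qle C a ?e"
        using a b S_def by auto
      have abC: "qmul C a b \<in> qcar C" using mulc aC bC by blast
      have "qle C (qmul C a b) (qmul C a ?e)" by (rule monl[OF aC bC eC be])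
      then have "qle C (qmul C a b) a" using eu aC by simp
      then have "qle C (qmul C a b) ?e" by (rule qtrans[OF o abC aC eC _ ae])
      then show "qmul C a b \<in> S" using abC S_def by simp
    qed
    have ie: "qinv C ?e = ?e"
    proof -
      have ieC: "qinv C ?e \<in> qcar C" using invc eC by blast
      have "?e = qinv C (qinv C ?e)" using invc eC by simp
      also have "\<dots> = qinv C (qmul C (qinv C ?e) ?e)" using eu ieC by simp
      also have "\<dots> = qmul C (qinv C ?e) (qinv C (qinv C ?e))" using invm ieC eC by simp
      also have "\<dots> = qinv C ?e" using invc eC eu ieC by simp
      finally show ?thesis by simp
    qed
    have inv: "\<forall>a\<in>S. qinv C a \<in> S"
    proof
      fix a assume a: "a \<in> S"
      have aC: "a \<in> qcar C" and ae: "qle C a ?e" using a S_def by auto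
      have "qle C (qinv C a) (qinv C ?e)"
      proof (rule sup_mono[OF cl cl, of "qinv C" a ?e])
        show "qinv C ` qcar C \<subseteq> qcar C" using invc by auto
      qed (use invs aC eC ae in auto)
      then show "qinv C a \<in> S" using ie invc aC S_def by auto
    qed
    have lamS: "\<forall>i\<in>I. lam i ` qcar (D i) \<subseteq> S"
    proof (intro ballI subsetI)
      fix i y assume i: "i \<in> I" and y: "y \<in> lam i ` qcar (D i)"
      then obtain x where x: "x \<in> qcar (D i)" "y = lam i x" by blast
      have h: "qhom K (D i) C (lam i)" using hC i by blast
      have L: "is_locale (D i)" using Dl i by blast
      have tD: "qtop (D i) \<in> qcar (D i)" "qle (D i) x (qtop (D i))" using top_props[OF clD[OF i]] x by auto
      have img: "lam i ` qcar (D i) \<subseteq> qcar C" by (rule hom_img[OF h])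
      have "qle C (lam i x) (lam i (qtop (D i)))"
        by (rule sup_mono[OF clD[OF i] cl img hom_sup[OF h] x(1) tD(1) tD(2)])
      moreover have "lam i (qtop (D i)) = ?e"
        using hom_K[OF h] loc_unit[OF L] UnitalInvQ by simp
      moreover have "lam i x \<in> qcar C" using img x by auto
      ultimately show "y \<in> S" using x S_def by auto
    qed
    have ut: "case K of UnitalInvQ \<Rightarrow> qunit C \<in> S | StrongInvQ \<Rightarrow> qtop (C\<lparr>qcar := S\<rparr>) = qtop C"
      using UnitalInvQ eC qrefl[OF o eC] unfolding S_def by simp
    have "qcar C \<subseteq> S" by (rule key[OF col S sup mul inv lamS ut])
    then have "qle C (qtop C) ?e" using tC S_def by auto
    moreover have "qle C ?e (qtop C)" using tC eC by blast
    ultimately have "qtop C = ?e" by (rule qantisym[OF o tC(1) eC])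
    then show ?thesis using ue q unfolding strictly_two_sided_def by simp
  next
    case StrongInvQ
    let ?t = "qtop C"
    have tt: "qmul C ?t ?t = ?t" using oK StrongInvQ unfolding strong_def by simp
    define S where "S = {a \<in> qcar C. qmul C ?t a = a \<and> qmul C a ?t = a}"
    have S: "S \<subseteq> qcar C" using S_def by auto
    have tS: "?t \<in> S" using tt tC S_def by auto
    have sup: "\<forall>A\<subseteq>S. qSup C A \<in> S"
    proof (intro allI impI)
      fix A assume A: "A \<subseteq> S"
      then have AC: "A \<subseteq> qcar C" using S by auto
      have i1: "(\<lambda>b. qmul C ?t b) ` A = A" using A unfolding S_def by (force simp: image_iff)
      have i2: "(\<lambda>b. qmul C b ?t) ` A = A" using A unfolding S_def by (force simp: image_iff)
      have "qmul C ?t (qSup C A) = qSup C ((\<lambda>b. qmul C ?t b) ` A) \<and>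
        qmul C (qSup C A) ?t = qSup C ((\<lambda>b. qmul C b ?t) ` A)" using dist tC(1) AC by blast
      then show "qSup C A \<in> S" using i1 i2 qSup_in[OF cl AC] unfolding S_def by simp
    qed
    have mul: "\<forall>a\<in>S. \<forall>b\<in>S. qmul C a b \<in> S"
    proof (intro ballI)
      fix a b assume a: "a \<in> S" and b: "b \<in> S"
      have aC: "a \<in> qcar C" and bC: "b \<in> qcar C" and at: "qmul C ?t a = a" and bt: "qmul C b ?t = b"
        using a b S_def by auto
      have "qmul C ?t (qmul C a b) = qmul C (qmul C ?t a) b" using assoc tC(1) aC bC by simp
      moreover have "qmul C (qmul C a b) ?t = qmul C a (qmul C b ?t)" using assoc tC(1) aC bC by simp
      moreover have "qmul C a b \<in> qcar C" using mulc aC bC by blast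
      ultimately show "qmul C a b \<in> S" using at bt S_def by simp
    qed
    have it: "qinv C ?t = ?t"
    proof -
      have "qinv C ` qcar C = qcar C" using invc by (force simp: image_iff)
      then show ?thesis using invs unfolding qtop_def by simp
    qed
    have inv: "\<forall>a\<in>S. qinv C a \<in> S"
    proof
      fix a assume a: "a \<in> S"
      have aC: "a \<in> qcar C" and at: "qmul C ?t a = a" and ta: "qmul C a ?t = a" using a S_def by auto
      have "qmul C ?t (qinv C a) = qinv C (qmul C a ?t)" using invm aC tC(1) it by simp
      moreover have "qmul C (qinv C a) ?t = qinv C (qmul C ?t a)" using invm aC tC(1) it by simp
      moreover have "qinv C a \<in> qcar C" using invc aC by blast
      ultimately show "qinv C a \<in> S" using at ta S_def by simp
    qed
    have lamS: "\<forall>i\<in>I. lam i ` qcar (D i) \<subseteq> S"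
    proof (intro ballI subsetI)
      fix i y assume i: "i \<in> I" and y: "y \<in> lam i ` qcar (D i)"
      then obtain x where x: "x \<in> qcar (D i)" "y = lam i x" by blast
      have h: "qhom K (D i) C (lam i)" using hC i by blast
      have L: "is_locale (D i)" using Dl i by blast
      have tD: "qtop (D i) \<in> qcar (D i)" using top_props[OF clD[OF i]] by auto
      have lt: "lam i (qtop (D i)) = ?t" using hom_K[OF h] StrongInvQ by simp
      have m: "qmul (D i) (qtop (D i)) x = x \<and> qmul (D i) x (qtop (D i)) = x"
        by (rule locale_top_mul[OF L x(1)])
      have hm: "\<forall>a\<in>qcar (D i). \<forall>b\<in>qcar (D i). lam i (qmul (D i) a b) = qmul C (lam i a) (lam i b)"
        by (rule hom_mul[OF h])
      have "qmul C ?t (lam i x) = lam i (qmul (D i) (qtop (D i)) x)" using hm tD x(1) lt by simp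
      then have 1: "qmul C ?t (lam i x) = lam i x" using m by simp
      have "qmul C (lam i x) ?t = lam i (qmul (D i) x (qtop (D i)))" using hm tD x(1) lt by simp
      then have 2: "qmul C (lam i x) ?t = lam i x" using m by simp
      have "lam i x \<in> qcar C" using hom_img[OF h] x by auto
      then show "y \<in> S" using x 1 2 S_def by simp
    qed
    have sub0: "involutive_quantale (C\<lparr>qcar := S\<rparr>) \<and> (\<forall>A\<subseteq>S. qSup (C\<lparr>qcar := S\<rparr>) A = qSup C A)"
      by (rule sub_iq[OF iq S sup mul inv])
    have se: "\<forall>A\<subseteq>S. qSup (C\<lparr>qcar := S\<rparr>) A = qSup C A" using sub0 by (rule conjunct2)
    have "is_lub C S ?t" unfolding is_lub_def
    proof (intro conjI ballI impI)
      show "?t \<in> qcar C" by (rule tC(1))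
      fix a assume "a \<in> S" then show "qle C a ?t" using tC S by auto
    next
      fix y assume "y \<in> qcar C" "\<forall>a\<in>S. qle C a y" then show "qle C ?t y" using tS by blast
    qed
    then have "qSup C S = ?t" by (rule qSup_eq[OF o])
    then have "qtop (C\<lparr>qcar := S\<rparr>) = ?t" using se unfolding qtop_def by simp
    then have ut: "case K of UnitalInvQ \<Rightarrow> qunit C \<in> S | StrongInvQ \<Rightarrow> qtop (C\<lparr>qcar := S\<rparr>) = qtop C"
      using StrongInvQ by simp
    have "qcar C \<subseteq> S" by (rule key[OF col S sup mul inv lamS ut])
    then have "is_unit_elem C ?t" using tC unfolding S_def is_unit_elem_def by auto
    then show ?thesis using q unfolding strictly_two_sided_def by simp
  qed
qed

end
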